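(* Let $f:\Omega^\infty\to\Omega$ be a finitary Boolean function. Then almost surely the pivotal set $\mathcal{P}(f)(\omega)$ is finite. If in addition $f$ is $1$-knowable, then the total influence is finite: $I(f)=\sum_{k\ge1} I_k(f)<\infty$.
   Context: Let $\Omega=\{-1,1\}$ and $\Omega^\infty=\{-1,1\}^{\mathbb N}$ with the uniform product probability measure; $\omega=(\omega_1,\omega_2,\dots)$ denotes a uniformly random element. A Boolean function is a (measurable) map $f:\Omega^\infty\to\Omega$. For $k\in\mathbb N$, $\omega^{(k)}$ denotes $\omega$ with bit $k$ flipped. The pivotal set is $\mathcal{P}(f)(\omega)=\{i\in\mathbb N: f(\omega^{(i)})\neq f(\omega)\}$; the influence of bit $k$ is $I_k(f)=\mathbb P(k\in\mathcal P(f)(\omega))$ and the total influence is $I(f)=\sum_k I_k(f)$. A set $W\subseteq\mathbb N$ is a witness set for $f$ at $\omega$ if there is an event $A$ with $\mathbb P(A)=1$ such that for all $\tilde\omega\in A$: if $\tilde\omega_i=\omega_i$ for all $i\in W$ then $f(\tilde\omega)=f(\omega)$. $f$ is finitary if almost surely there exists a finite witness set; then $W=W(f)(\omega)$ denotes the least finite witness set in the order: smaller maximum first, then smaller cardinality, then lexicographic. $f$ is $p$-knowable ($p>0$) if it is finitary and $\mathbb E[(\max W)^p]<\infty$. *)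

theory Defs
  imports "HOL-Probability.Probability"
begin

text \<open>The sign set Omega = {-1,1}; bits are indexed by nat (index i here is bit i+1 of the paper).\<close>
definition Sgn :: "int set" where "Sgn = {-1, 1}"

definition Cube :: "(nat \<Rightarrow> int) measure" where
  "Cube = (\<Pi>\<^sub>M i\<in>(UNIV::nat set). uniform_count_measure Sgn)"

definition boolean_function :: "((nat \<Rightarrow> int) \<Rightarrow> int) \<Rightarrow> bool" where
  "boolean_function f \<longleftrightarrow> f \<in> Cube \<rightarrow>\<^sub>M count_space Sgn"

definition flip :: "nat \<Rightarrow> (nat \<Rightarrow> int) \<Rightarrow> (nat \<Rightarrow> int)" where
  "flip k x = x(k := -(x k))"

definition pivotal :: "((nat \<Rightarrow> int) \<Rightarrow> int) \<Rightarrow> (nat \<Rightarrow> int) \<Rightarrow> nat set" where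
  "pivotal f x = {i. f (flip i x) \<noteq> f x}"

definition influence :: "((nat \<Rightarrow> int) \<Rightarrow> int) \<Rightarrow> nat \<Rightarrow> real" where
  "influence f k = measure Cube {x \<in> space Cube. k \<in> pivotal f x}"

definition total_influence :: "((nat \<Rightarrow> int) \<Rightarrow> int) \<Rightarrow> real" where
  "total_influence f = (\<Sum>k. influence f k)"

definition witness :: "((nat \<Rightarrow> int) \<Rightarrow> int) \<Rightarrow> nat set \<Rightarrow> (nat \<Rightarrow> int) \<Rightarrow> bool" where
  "witness f W x \<longleftrightarrow> (\<exists>A \<in> sets Cube. emeasure Cube A = 1 \<and>
      (\<forall>y \<in> A. (\<forall>i \<in> W. y i = x i) \<longrightarrow> f y = f x))"

definition finitary :: "((nat \<Rightarrow> int) \<Rightarrow> int) \<Rightarrow> bool" where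
  "finitary f \<longleftrightarrow> (AE x in Cube. \<exists>W. finite W \<and> witness f W x)"

text \<open>Maximum of a finite index set in the paper's 1-based indexing (max of the empty set = 0).\<close>
definition wmax :: "nat set \<Rightarrow> nat" where
  "wmax W = (if W = {} then 0 else Max W + 1)"

definition wkey_le :: "nat set \<Rightarrow> nat set \<Rightarrow> bool" where
  "wkey_le W V \<longleftrightarrow> wmax W < wmax V \<or> (wmax W = wmax V \<and> (card W < card V \<or>
     (card W = card V \<and> (sorted_list_of_set W = sorted_list_of_set V \<or>
        (sorted_list_of_set W, sorted_list_of_set V) \<in> lexord {(a, b). a < b}))))"

definition least_witness :: "((nat \<Rightarrow> int) \<Rightarrow> int) \<Rightarrow> (nat \<Rightarrow> int) \<Rightarrow> nat set" where
  "least_witness f x = (THE W. finite W \<and> witness f W x \<and>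
      (\<forall>V. finite V \<and> witness f V x \<longrightarrow> wkey_le W V))"

definition knowable :: "real \<Rightarrow> ((nat \<Rightarrow> int) \<Rightarrow> int) \<Rightarrow> bool" where
  "knowable p f \<longleftrightarrow> finitary f \<and>
     (\<integral>\<^sup>+ x. ennreal (real (wmax (least_witness f x)) powr p) \<partial>Cube) < \<infinity>"

end

theory Submission
  imports Defs
begin

lemma prob_Cube: "prob_space Cube"
  unfolding Cube_def by (intro prob_space_PiM prob_space_uniform_count_measure) (auto simp: Sgn_def)

lemma space_Cube: "space Cube = {x. \<forall>i. x i \<in> Sgn}"
  unfolding Cube_def by (auto simp: space_PiM space_uniform_count_measure)

lemma flip_meas: "flip k \<in> Cube \<rightarrow>\<^sub>M Cube"
proof -
  have e: "flip k = (\<lambda>x i. (\<lambda>i x. if i = k then - x i else x i) i x)"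
    by (auto simp: flip_def fun_eq_iff)
  show ?thesis unfolding e
    unfolding Cube_def
  proof (rule measurable_PiM_single')
    fix i :: nat
    show "(\<lambda>x. if i = k then - x i else x i) \<in> (\<Pi>\<^sub>M i\<in>UNIV. uniform_count_measure Sgn) \<rightarrow>\<^sub>M uniform_count_measure Sgn"
    proof (cases "i = k")
      case True
      have "(\<lambda>x. x i) \<in> (\<Pi>\<^sub>M i\<in>UNIV. uniform_count_measure Sgn) \<rightarrow>\<^sub>M uniform_count_measure Sgn" by simp
      moreover have "uminus \<in> uniform_count_measure Sgn \<rightarrow>\<^sub>M uniform_count_measure Sgn"
        by (auto simp: measurable_def sets_uniform_count_measure space_uniform_count_measure Sgn_def)
      ultimately show ?thesis using True by (simp add: measurable_compose)
    qed simp
  next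
    show "(\<lambda>x i. if i = k then - x i else x i) \<in> space (\<Pi>\<^sub>M i\<in>UNIV. uniform_count_measure Sgn) \<rightarrow> (\<Pi>\<^sub>E i\<in>UNIV. space (uniform_count_measure Sgn))"
      apply (auto simp: space_PiM space_uniform_count_measure Sgn_def PiE_iff)
      by metis+
  qed
qed

lemma PPS: "product_prob_space (\<lambda>_::nat. uniform_count_measure Sgn)"
proof -
  have P: "prob_space (uniform_count_measure Sgn)" by (intro prob_space_uniform_count_measure) (auto simp: Sgn_def)
  then show ?thesis
    unfolding product_prob_space_def product_prob_space_axioms_def product_sigma_finite_def
    by (auto intro: prob_space_imp_sigma_finite)
qed

lemma distr_flip: "distr Cube Cube (flip k) = Cube"
proof -
  let ?M = "uniform_count_measure Sgn"
  have finS: "finite Sgn" by (simp add: Sgn_def)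
  have neg: "emeasure ?M (uminus ` X) = emeasure ?M X" if "X \<subseteq> Sgn" for X
  proof -
    have "uminus ` X \<subseteq> Sgn" using that by (auto simp: Sgn_def)
    moreover have "card (uminus ` X) = card X" by (simp add: card_image)
    ultimately show ?thesis using that finS by (simp add: emeasure_uniform_count_measure)
  qed
  show ?thesis
  proof (rule measure_eqI_PiM_infinite[symmetric, where I=UNIV and M="\<lambda>_. ?M"])
    show "sets Cube = sets (Pi\<^sub>M UNIV (\<lambda>_. ?M))" by (simp add: Cube_def)
    show "sets (distr Cube Cube (flip k)) = sets (Pi\<^sub>M UNIV (\<lambda>_. ?M))" by (simp add: Cube_def)
    show "finite_measure Cube" using prob_Cube by (simp add: prob_space_def)
    fix A J assume J: "finite J" "J \<subseteq> (UNIV::nat set)" and A: "\<And>i. i \<in> J \<Longrightarrow> A i \<in> sets ?M"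
    have AS: "A i \<subseteq> Sgn" if "i \<in> J" for i using A[OF that] by (simp add: sets_uniform_count_measure)
    define A' where "A' i = (if i = k then uminus ` A i else A i)" for i
    have A'S: "A' i \<in> sets ?M" if "i \<in> J" for i using AS[OF that]
      by (auto simp: A'_def sets_uniform_count_measure Sgn_def)
    have pre: "flip k -` prod_emb UNIV (\<lambda>_. ?M) J (Pi\<^sub>E J A) \<inter> space Cube
        = prod_emb UNIV (\<lambda>_. ?M) J (Pi\<^sub>E J A')"
    proof (rule set_eqI)
      fix x :: "nat \<Rightarrow> int"
      have m: "y \<in> prod_emb UNIV (\<lambda>_. ?M) J X \<longleftrightarrow> (\<forall>i. y i \<in> Sgn) \<and> restrict y J \<in> X" for y X
        by (auto simp: prod_emb_iff space_uniform_count_measure)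
      have fl: "flip k x i = (if i = k then - x i else x i)" for i by (simp add: flip_def)
      have sp: "(\<forall>i. flip k x i \<in> Sgn) \<longleftrightarrow> (\<forall>i. x i \<in> Sgn)"
      proof -
        have "flip k x i \<in> Sgn \<longleftrightarrow> x i \<in> Sgn" for i unfolding fl by (auto simp: Sgn_def)
        then show ?thesis by simp
      qed
      have r: "(\<forall>i\<in>J. flip k x i \<in> A i) \<longleftrightarrow> (\<forall>i\<in>J. x i \<in> A' i)"
      proof -
        have "flip k x i \<in> A i \<longleftrightarrow> x i \<in> A' i" for i
          unfolding fl A'_def by (cases "i = k") (auto simp: image_iff intro: bexI[where x="- x k"])
        then show ?thesis by simp
      qed
      show "x \<in> flip k -` prod_emb UNIV (\<lambda>_. ?M) J (Pi\<^sub>E J A) \<inter> space Cube \<longleftrightarrow> x \<in> prod_emb UNIV (\<lambda>_. ?M) J (Pi\<^sub>E J A')"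
        using m[of "flip k x"] m[of x] sp r by (auto simp: space_Cube restrict_PiE_iff)
    qed
    have "emeasure Cube (prod_emb UNIV (\<lambda>_. ?M) J (Pi\<^sub>E J A)) = (\<Prod>i\<in>J. emeasure ?M (A i))"
      unfolding Cube_def using J A by (intro product_prob_space.emeasure_PiM_emb[OF PPS]) auto
    also have "\<dots> = (\<Prod>i\<in>J. emeasure ?M (A' i))"
      using AS by (intro prod.cong) (auto simp: A'_def neg)
    also have "\<dots> = emeasure Cube (prod_emb UNIV (\<lambda>_. ?M) J (Pi\<^sub>E J A'))"
      unfolding Cube_def using J A'S by (intro product_prob_space.emeasure_PiM_emb[OF PPS, symmetric]) auto
    also have "\<dots> = emeasure (distr Cube Cube (flip k)) (prod_emb UNIV (\<lambda>_. ?M) J (Pi\<^sub>E J A))"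
    proof -
      have "prod_emb UNIV (\<lambda>_. ?M) J (Pi\<^sub>E J A) \<in> sets Cube" unfolding Cube_def using J A by (intro sets_PiM_I) auto
      then show ?thesis by (simp add: emeasure_distr[OF flip_meas] pre)
    qed
    finally show "emeasure Cube (prod_emb UNIV (\<lambda>_. ?M) J (Pi\<^sub>E J A)) = 
       emeasure (distr Cube Cube (flip k)) (prod_emb UNIV (\<lambda>_. ?M) J (Pi\<^sub>E J A))" .
  qed
qed


definition cyl :: "(nat \<times> int) list \<Rightarrow> (nat \<Rightarrow> int) \<Rightarrow> bool" where
  "cyl p y \<longleftrightarrow> (\<forall>(i,v)\<in>set p. y i = v)"

definition good :: "((nat \<Rightarrow> int) \<Rightarrow> int) \<Rightarrow> (nat \<times> int) list \<Rightarrow> (nat \<Rightarrow> int) \<Rightarrow> bool" where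
  "good f p x \<longleftrightarrow> (cyl p x \<longrightarrow> (\<exists>z. cyl p z \<and> witness f (fst ` set p) z) \<longrightarrow>
      f x = f (SOME z. cyl p z \<and> witness f (fst ` set p) z))"

lemma AE_good: "AE x in Cube. good f p x"
proof (cases "\<exists>z. cyl p z \<and> witness f (fst ` set p) z")
  case False
  then have "\<forall>x. good f p x" by (auto simp: good_def)
  then show ?thesis by simp
next
  case True
  define z where "z = (SOME z. cyl p z \<and> witness f (fst ` set p) z)"
  have z: "cyl p z" "witness f (fst ` set p) z" using someI_ex[OF True] unfolding z_def by auto
  then obtain A where A: "A \<in> sets Cube" "emeasure Cube A = 1"
    "\<forall>y\<in>A. (\<forall>i\<in>fst ` set p. y i = z i) \<longrightarrow> f y = f z"
    unfolding witness_def by blast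
  have "AE y in Cube. y \<in> A"
    using prob_space.AE_in_set_eq_1[OF prob_Cube A(1)] A(2) by (simp add: measure_def)
  then show ?thesis
  proof (rule eventually_mono)
    fix y assume y: "y \<in> A"
    show "good f p y" unfolding good_def z_def[symmetric]
    proof (intro impI)
      assume "cyl p y"
      then have "\<forall>i\<in>fst ` set p. y i = z i" using z(1) unfolding cyl_def by force
      then show "f y = f z" using A(3) y by blast
    qed
  qed
qed

lemma AE_flip: assumes "AE x in Cube. P x" shows "AE x in Cube. P (flip k x)"
proof -
  have "AE x in distr Cube Cube (flip k). P x" unfolding distr_flip by (rule assms)
  then show ?thesis by (rule AE_distrD[OF flip_meas])
qed

lemma AE_pivotal_sub: "AE x in Cube. \<forall>W. finite W \<and> witness f W x \<longrightarrow> pivotal f x \<subseteq> W"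
proof -
  have 1: "AE x in Cube. \<forall>p. good f p x" using AE_good by (simp add: AE_all_countable)
  have 2: "AE x in Cube. \<forall>k p. good f p (flip k x)"
    using AE_good AE_flip by (simp add: AE_all_countable)
  show ?thesis using 1 2
  proof (eventually_elim)
    case (elim x)
    show ?case
    proof (intro allI impI subsetI)
      fix W k assume W: "finite W \<and> witness f W x" and k: "k \<in> pivotal f x"
      show "k \<in> W"
      proof (rule ccontr)
        assume kW: "k \<notin> W"
        define p where "p = map (\<lambda>i. (i, x i)) (sorted_list_of_set W)"
        have sp: "set p = (\<lambda>i. (i, x i)) ` W" using W by (simp add: p_def)
        have fp: "fst ` set p = W" unfolding sp by (simp add: image_image)
        have cx: "cyl p x" by (auto simp: cyl_def sp)
        have cf: "cyl p (flip k x)" using kW by (auto simp: cyl_def sp flip_def)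
        have ex: "\<exists>z. cyl p z \<and> witness f (fst ` set p) z" using cx W fp by auto
        have g1: "good f p x" using elim by blast
        have g2: "good f p (flip k x)" using elim by blast
        have "f x = f (flip k x)"
          using g1 g2 cx cf ex
          unfolding good_def by simp
        then show False using k by (simp add: pivotal_def)
      qed
    qed
  qed
qed

lemma part1: assumes "finitary f" shows "AE x in Cube. finite (pivotal f x)"
  using AE_pivotal_sub[of f] assms unfolding finitary_def
  by eventually_elim (auto intro: finite_subset)


lemma wkey_antisym:
  assumes "finite W" "finite V" "wkey_le W V" "wkey_le V W" shows "W = V"
proof -
  let ?r = "{(a::nat, b). a < b}"
  have tr: "trans ?r" by (auto simp: trans_def)
  have irr: "(xs, xs) \<notin> lexord ?r" for xs by (rule lexord_irreflexive) simp
  have "sorted_list_of_set W = sorted_list_of_set V"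
    using assms(3,4) lexord_trans[OF _ _ tr] irr unfolding wkey_le_def by fastforce
  then show ?thesis using assms(1,2) by (metis set_sorted_list_of_set)
qed

lemma sub_wmax: "finite W \<Longrightarrow> W \<subseteq> {..<wmax W}"
  by (auto simp: wmax_def less_Suc_eq_le)

lemma least_ex:
  assumes "finite W0" "Q W0"
  shows "\<exists>!W. finite W \<and> Q W \<and> (\<forall>V. finite V \<and> Q V \<longrightarrow> wkey_le W V)"
proof -
  define S where "S = {W. finite W \<and> Q W}"
  define m where "m = (LEAST n. \<exists>W\<in>S. wmax W = n)"
  have m1: "\<exists>W\<in>S. wmax W = m" unfolding m_def by (rule LeastI_ex) (use assms S_def in auto)
  have m2: "m \<le> wmax W" if "W \<in> S" for W unfolding m_def by (rule Least_le) (use that in auto)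
  define S1 where "S1 = {W\<in>S. wmax W = m}"
  define c where "c = (LEAST c. \<exists>W\<in>S1. card W = c)"
  have c1: "\<exists>W\<in>S1. card W = c" unfolding c_def by (rule LeastI_ex) (use m1 S1_def in auto)
  have c2: "c \<le> card W" if "W \<in> S1" for W unfolding c_def by (rule Least_le) (use that in auto)
  define S2 where "S2 = {W\<in>S1. card W = c}"
  let ?r = "{(a::nat, b). a < b}"
  have wfR: "wf (lex ?r)" using wf_less by (rule wf_lex)
  obtain W1 where W1: "W1 \<in> S2" using c1 S2_def by auto
  have "sorted_list_of_set W1 \<in> sorted_list_of_set ` S2" using W1 by auto
  from wfE_min[OF wfR this] obtain l0 where l0: "l0 \<in> sorted_list_of_set ` S2"
     and min: "\<And>y. (y, l0) \<in> lex ?r \<Longrightarrow> y \<notin> sorted_list_of_set ` S2" by metis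
  then obtain W0' where W0': "W0' \<in> S2" "l0 = sorted_list_of_set W0'" by auto
  have fin0: "finite W0'" "Q W0'" "wmax W0' = m" "card W0' = c" using W0' by (auto simp: S2_def S1_def S_def)
  have least: "wkey_le W0' V" if V: "finite V" "Q V" for V
  proof -
    have VS: "V \<in> S" using V by (simp add: S_def)
    show ?thesis
    proof (cases "wmax V = m")
      case False then show ?thesis using m2[OF VS] fin0 by (simp add: wkey_le_def)
    next
      case True
      then have VS1: "V \<in> S1" using VS by (simp add: S1_def)
      show ?thesis
      proof (cases "card V = c")
        case False then show ?thesis using c2[OF VS1] fin0 True by (simp add: wkey_le_def)
      next
        case True2: True
        then have VS2: "V \<in> S2" using VS1 by (simp add: S2_def)
        have lin: "(sorted_list_of_set W0', sorted_list_of_set V) \<in> lexord ?r \<or>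
            sorted_list_of_set W0' = sorted_list_of_set V \<or>
            (sorted_list_of_set V, sorted_list_of_set W0') \<in> lexord ?r"
          by (rule lexord_linear) auto
        have "(sorted_list_of_set V, sorted_list_of_set W0') \<notin> lexord ?r"
        proof
          assume "(sorted_list_of_set V, sorted_list_of_set W0') \<in> lexord ?r"
          then have "(sorted_list_of_set V, l0) \<in> lex ?r"
            using W0'(2) fin0 True2 V(1) by (simp add: lexord_lex)
          then show False using min VS2 by blast
        qed
        then show ?thesis using lin True True2 fin0 by (auto simp: wkey_le_def)
      qed
    qed
  qed
  show ?thesis
  proof (rule ex1I[of _ W0'])
    show "finite W0' \<and> Q W0' \<and> (\<forall>V. finite V \<and> Q V \<longrightarrow> wkey_le W0' V)" using fin0 least by auto
    fix W assume W: "finite W \<and> Q W \<and> (\<forall>V. finite V \<and> Q V \<longrightarrow> wkey_le W V)"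
    then show "W = W0'" using least[of W] fin0 wkey_antisym by blast
  qed
qed

lemma least_witness_prop:
  assumes "finite W" "witness f W x"
  shows "finite (least_witness f x) \<and> witness f (least_witness f x) x"
  using theI'[OF least_ex[of W "\<lambda>W. witness f W x", OF assms]]
  unfolding least_witness_def by blast


lemma part2:
  assumes bf: "boolean_function f" and kn: "knowable 1 f"
  shows "summable (\<lambda>k. influence f k)"
proof -
  have fin: "finitary f" using kn by (simp add: knowable_def)
  have fm: "f \<in> Cube \<rightarrow>\<^sub>M count_space Sgn" using bf by (simp add: boolean_function_def)
  define P where "P k = {x \<in> space Cube. k \<in> pivotal f x}" for k
  have Pm: "P k \<in> sets Cube" for k
  proof -
    have gm: "(\<lambda>x. f (flip k x)) \<in> Cube \<rightarrow>\<^sub>M count_space Sgn"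
      using measurable_compose[OF flip_meas fm] by (simp add: comp_def)
    have fS: "f x \<in> Sgn" "f (flip k x) \<in> Sgn" if "x \<in> space Cube" for x
      using measurable_space[OF fm that] measurable_space[OF gm that] by auto
    have eq: "P k = (\<Union>a\<in>Sgn. ((\<lambda>x. f (flip k x)) -` {a} \<inter> space Cube) \<inter> (space Cube - (f -` {a} \<inter> space Cube)))"
      unfolding P_def pivotal_def using fS by auto
    show ?thesis unfolding eq
      using measurable_sets[OF gm] measurable_sets[OF fm]
      by (intro sets.finite_UN) (auto simp: Sgn_def)
  qed
  have infl: "ennreal (influence f k) = emeasure Cube (P k)" for k
    unfolding influence_def P_def[symmetric]
  proof -
    have "finite_measure Cube" using prob_Cube by (simp add: prob_space_def)
    then show "ennreal (measure Cube (P k)) = emeasure Cube (P k)"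
      using finite_measure.emeasure_eq_measure by metis
  qed
  have "(\<Sum>k. ennreal (influence f k)) = (\<Sum>k. \<integral>\<^sup>+ x. indicator (P k) x \<partial>Cube)"
    by (simp add: infl Pm)
  also have "\<dots> = (\<integral>\<^sup>+ x. (\<Sum>k. indicator (P k) x) \<partial>Cube)"
    by (rule nn_integral_suminf[symmetric]) (simp add: Pm borel_measurable_indicator)
  also have "\<dots> \<le> (\<integral>\<^sup>+ x. ennreal (real (wmax (least_witness f x)) powr 1) \<partial>Cube)"
  proof (rule nn_integral_mono_AE)
    show "AE x in Cube. (\<Sum>k. indicator (P k) x) \<le> ennreal (real (wmax (least_witness f x)) powr 1)"
      using AE_pivotal_sub[of f] fin unfolding finitary_def
    proof eventually_elim
      case (elim x)
      then obtain W where "finite W" "witness f W x" by blast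
      then have L: "finite (least_witness f x)" "witness f (least_witness f x) x"
        using least_witness_prop by blast+
      let ?W = "least_witness f x"
      have sub: "pivotal f x \<subseteq> {..<wmax ?W}" using elim(1) L sub_wmax[OF L(1)] by blast
      have "(\<Sum>k. indicator (P k) x :: ennreal) = (\<Sum>k<wmax ?W. indicator (P k) x)"
        by (rule suminf_finite) (use sub in \<open>auto simp: P_def indicator_def\<close>)
      also have "\<dots> \<le> (\<Sum>k<wmax ?W. 1)" by (rule sum_mono) (simp add: indicator_def)
      also have "\<dots> = ennreal (real (wmax ?W) powr 1)" by (simp add: ennreal_of_nat_eq_real_of_nat)
      finally show ?case .
    qed
  qed
  also have "\<dots> < \<infinity>" using kn by (simp add: knowable_def)
  finally have "(\<Sum>k. ennreal (influence f k)) \<noteq> \<top>" by simp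
  then show ?thesis
    by (rule summable_suminf_not_top[rotated]) (simp add: influence_def)
qed

theorem mainTheorem1:
  fixes f :: "(nat \<Rightarrow> int) \<Rightarrow> int"
  assumes "boolean_function f" and "finitary f"
  shows "(AE x in Cube. finite (pivotal f x))
    \<and> (knowable 1 f \<longrightarrow> summable (\<lambda>k. influence f k))"
  using part1[OF assms(2)] part2[OF assms(1)] by blast

end
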